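(* Let $A,B\subseteq\Gamma$ be finite nonempty sets. Then there are $s\ge2^{-4}|A||B|^2\mathsf{E}(A,B)^{-1}$ pairwise disjoint sets $A_j\subseteq A+b_j$ with $|A_j|\ge|A|/2$ and $b_j\in B$, $j\in[s]$. Moreover, for any set $S\subseteq A+B$ put $\sigma=\sum_{x\in S}(A*B)(x)$ and suppose $\sigma\ge16|B|$. Then there are $s\ge2^{-8}\sigma^3|A|^{-2}|B|^{-1}\mathsf{E}(A,B)^{-1}$ pairwise disjoint sets $S_j\subseteq S\cap(A+b_j)$ with $|S_j|\ge2^{-3}\sigma|B|^{-1}$ and $b_j\in B$, $j\in[s]$.
   Context: $\Gamma$ is an abelian group. $(A*B)(x)=|\{(a,b)\in A\times B:a+b=x\}|$. $\mathsf{E}(A,B)=|\{(a_1,a_2,b_1,b_2)\in A^2\times B^2:a_1+b_1=a_2+b_2\}|$. *)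

theory Defs
  imports Complex_Main
begin

definition conv :: "'a::ab_group_add set \<Rightarrow> 'a set \<Rightarrow> 'a \<Rightarrow> nat" where
  "conv A B x = card {(a, b). a \<in> A \<and> b \<in> B \<and> a + b = x}"

definition energy :: "'a::ab_group_add set \<Rightarrow> 'a set \<Rightarrow> nat" where
  "energy A B = card {(a1, a2, b1, b2). a1 \<in> A \<and> a2 \<in> A \<and> b1 \<in> B \<and> b2 \<in> B \<and> a1 + b1 = a2 + b2}"

definition sumset :: "'a::ab_group_add set \<Rightarrow> 'a set \<Rightarrow> 'a set" where
  "sumset A B = {a + b | a b. a \<in> A \<and> b \<in> B}"

end

theory Submission imports Defs begin

lemma greedy:
  fixes C :: "'b set" and X :: "'b \<Rightarrow> 'a set" and t :: real
  assumes finC: "finite C" and tpos: "t > 0" and finX: "\<And>b. b \<in> C \<Longrightarrow> finite (X b)"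
  shows "\<exists>(s::nat) Y bs. (\<forall>j<s. bs j \<in> C \<and> Y j \<subseteq> X (bs j) \<and> t \<le> real (card (Y j)))
     \<and> (\<forall>i<s. \<forall>j<s. i \<noteq> j \<longrightarrow> Y i \<inter> Y j = {})
     \<and> (\<forall>b\<in>C. real (card (X b - (\<Union>j<s. Y j))) < t)"
proof -
  define Inv where "Inv (s::nat) Y bs \<longleftrightarrow> (\<forall>j<s. bs j \<in> C \<and> Y j \<subseteq> X (bs j) \<and> t \<le> real (card (Y j)))
     \<and> (\<forall>i<s. \<forall>j<s. i \<noteq> j \<longrightarrow> Y i \<inter> Y j = {})" for s Y bs
  define bad where "bad s Y = {b\<in>C. t \<le> real (card (X b - (\<Union>j<s. Y j)))}" for s :: nat and Y
  have main: "\<forall>s Y bs. Inv s Y bs \<longrightarrow> card (bad s Y) = n \<longrightarrow> (\<exists>s Y bs. Inv s Y bs \<and> bad s Y = {})" for n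
  proof (induction n rule: less_induct)
    case (less n)
    show ?case
    proof (intro allI impI)
      fix s Y bs assume inv: "Inv s Y bs" and cn: "card (bad s Y) = n"
      show "\<exists>s Y bs. Inv s Y bs \<and> bad s Y = {}"
      proof (cases "bad s Y = {}")
        case True thus ?thesis using inv by blast
      next
        case False
        then obtain b where b: "b \<in> bad s Y" by blast
        define U where "U = (\<Union>j<s. Y j)"
        define Y' where "Y' = Y(s := X b - U)"
        define bs' where "bs' = bs(s := b)"
        have U': "(\<Union>j<Suc s. Y' j) = U \<union> X b"
          unfolding U_def Y'_def by (auto simp: lessThan_Suc)
        have bC: "b \<in> C" and tb: "t \<le> real (card (X b - U))" using b unfolding bad_def U_def by auto
        have inv': "Inv (Suc s) Y' bs'"
          using inv bC tb unfolding Inv_def Y'_def bs'_def U_def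
          by (auto simp: less_Suc_eq)
        have sub: "bad (Suc s) Y' \<subseteq> bad s Y - {b}"
        proof
          fix c assume c: "c \<in> bad (Suc s) Y'"
          hence cC: "c \<in> C" and tc: "t \<le> real (card (X c - (U \<union> X b)))" unfolding bad_def U' by auto
          have "card (X c - (U \<union> X b)) \<le> card (X c - U)"
            by (rule card_mono) (use finX cC in auto)
          hence "t \<le> real (card (X c - U))" using tc by linarith
          moreover have "c \<noteq> b" proof assume "c = b" moreover have "X b - (U \<union> X b) = {}" by blast ultimately have "card (X c - (U \<union> X b)) = 0" by (metis card.empty) thus False using tc tpos by linarith qed
          ultimately show "c \<in> bad s Y - {b}" using cC unfolding bad_def U_def by auto
        qed
        have finb: "finite (bad s Y)" unfolding bad_def using finC by auto
        have "card (bad (Suc s) Y') \<le> card (bad s Y - {b})"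
          by (rule card_mono) (use finb sub in auto)
        also have "\<dots> < n" using b finb cn card_gt_0_iff[of "bad s Y"] by auto
        finally show ?thesis using less.IH inv' by blast
      qed
    qed
  qed
  have "Inv 0 (\<lambda>_. {}) (\<lambda>_. undefined)" unfolding Inv_def by auto
  then obtain s Y bs where I: "Inv s Y bs" and B: "bad s Y = {}" using main by blast
  have "\<forall>b\<in>C. real (card (X b - (\<Union>j<s. Y j))) < t"
  proof
    fix b assume "b \<in> C"
    hence "b \<notin> bad s Y" using B by auto
    thus "real (card (X b - (\<Union>j<s. Y j))) < t" using \<open>b \<in> C\<close> unfolding bad_def by auto
  qed
  with I show ?thesis unfolding Inv_def by (intro exI[where x=s] exI[where x=Y] exI[where x=bs]) simp
qed

lemma pair_card:
  fixes A :: "'a::ab_group_add set"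
  shows "card {(a1, a2). a1 \<in> A \<and> a2 \<in> A \<and> a1 + b1 = a2 + b2}
       = card ((\<lambda>a. a + b1) ` A \<inter> (\<lambda>a. a + b2) ` A)"
proof -
  let ?P = "{(a1, a2). a1 \<in> A \<and> a2 \<in> A \<and> a1 + b1 = a2 + b2}"
  have inj: "inj_on (\<lambda>p. fst p + b1) ?P"
  proof (rule inj_onI)
    fix p q assume "p \<in> ?P" "q \<in> ?P" "fst p + b1 = fst q + b1"
    then obtain a1 a2 c1 c2 where "p = (a1,a2)" "q = (c1,c2)" "a1 + b1 = a2 + b2" "c1 + b1 = c2 + b2" "a1 = c1"
      by auto
    moreover have "a2 = c2" using calculation by (metis add_right_cancel)
    ultimately show "p = q" by simp
  qed
  have img: "(\<lambda>p. fst p + b1) ` ?P = (\<lambda>a. a + b1) ` A \<inter> (\<lambda>a. a + b2) ` A"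
  proof
    show "(\<lambda>p. fst p + b1) ` ?P \<subseteq> (\<lambda>a. a + b1) ` A \<inter> (\<lambda>a. a + b2) ` A"
      by auto
  next
    show "(\<lambda>a. a + b1) ` A \<inter> (\<lambda>a. a + b2) ` A \<subseteq> (\<lambda>p. fst p + b1) ` ?P"
    proof
      fix x assume "x \<in> (\<lambda>a. a + b1) ` A \<inter> (\<lambda>a. a + b2) ` A"
      then obtain a1 a2 where "a1 \<in> A" "a2 \<in> A" "x = a1 + b1" "x = a2 + b2" by auto
      thus "x \<in> (\<lambda>p. fst p + b1) ` ?P" by (intro image_eqI[of _ _ "(a1,a2)"]) auto
    qed
  qed
  show ?thesis using card_image[OF inj] img by simp
qed

lemma energy_sum:
  fixes A B :: "'a::ab_group_add set"
  assumes "finite A" "finite B"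
  shows "energy A B = (\<Sum>b2\<in>B. \<Sum>b1\<in>B. card ((\<lambda>a. a + b1) ` A \<inter> (\<lambda>a. a + b2) ` A))"
proof -
  define P where "P b1 b2 = {(a1, a2). a1 \<in> A \<and> a2 \<in> A \<and> a1 + b1 = a2 + b2}" for b1 b2
  define f where "f = (\<lambda>(bb::'a\<times>'a, aa::'a\<times>'a). (fst aa, snd aa, fst bb, snd bb))"
  have eq: "{(a1, a2, b1, b2). a1 \<in> A \<and> a2 \<in> A \<and> b1 \<in> B \<and> b2 \<in> B \<and> a1 + b1 = a2 + b2}
      = f ` (SIGMA bb:B\<times>B. P (fst bb) (snd bb))"
    unfolding f_def P_def by (auto simp: image_iff)
  have inj: "inj_on f (SIGMA bb:B\<times>B. P (fst bb) (snd bb))"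
    unfolding f_def by (auto simp: inj_on_def)
  have finP: "finite (P b1 b2)" for b1 b2
  proof -
    have "P b1 b2 \<subseteq> A \<times> A" unfolding P_def by auto
    thus ?thesis using assms finite_subset by blast
  qed
  have "energy A B = card (SIGMA bb:B\<times>B. P (fst bb) (snd bb))"
    unfolding energy_def eq using card_image[OF inj] by simp
  also have "\<dots> = (\<Sum>bb\<in>B\<times>B. card (P (fst bb) (snd bb)))"
    using card_SigmaI assms finP by (simp add: card_SigmaI)
  also have "\<dots> = (\<Sum>b1\<in>B. \<Sum>b2\<in>B. card (P b1 b2))"
    by (simp add: sum.cartesian_product split_beta)
  also have "\<dots> = (\<Sum>b2\<in>B. \<Sum>b1\<in>B. card (P b1 b2))"
    by (rule sum.swap)
  finally show ?thesis unfolding P_def pair_card .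
qed

lemma conv_eq:
  fixes A B :: "'a::ab_group_add set"
  shows "conv A B x = card {b\<in>B. x \<in> (\<lambda>a. a + b) ` A}"
proof -
  let ?Q = "{(a, b). a \<in> A \<and> b \<in> B \<and> a + b = x}"
  have inj: "inj_on snd ?Q" by (auto simp: inj_on_def)
  have "snd ` ?Q = {b\<in>B. x \<in> (\<lambda>a. a + b) ` A}" by (auto simp: image_iff)
  thus ?thesis unfolding conv_def using card_image[OF inj] by simp
qed

lemma sigma_eq:
  fixes A B S :: "'a::ab_group_add set"
  assumes "finite S" "finite B"
  shows "(\<Sum>x\<in>S. conv A B x) = (\<Sum>b\<in>B. card (S \<inter> (\<lambda>a. a + b) ` A))"
proof -
  have "(\<Sum>x\<in>S. conv A B x) = (\<Sum>x\<in>S. \<Sum>b\<in>B. if x \<in> (\<lambda>a. a + b) ` A then 1 else 0)"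
    unfolding conv_eq using assms by (simp add: sum.If_cases Int_def)
  also have "\<dots> = (\<Sum>b\<in>B. \<Sum>x\<in>S. if x \<in> (\<lambda>a. a + b) ` A then 1 else 0)" by (rule sum.swap)
  also have "\<dots> = (\<Sum>b\<in>B. card (S \<inter> (\<lambda>a. a + b) ` A))"
    using assms by (simp add: sum.If_cases)
  finally show ?thesis .
qed

lemma overlap:
  fixes A :: "'a::ab_group_add set"
  assumes "finite A" "\<forall>j<s. Y j \<subseteq> (\<lambda>a. a + bs j) ` A" "Z \<subseteq> (\<lambda>a. a + b) ` A"
  shows "card (Z \<inter> (\<Union>j<(s::nat). Y j)) \<le> (\<Sum>j<s. card ((\<lambda>a. a + b) ` A \<inter> (\<lambda>a. a + bs j) ` A))"
proof -
  have "Z \<inter> (\<Union>j<s. Y j) \<subseteq> (\<Union>j<s. (\<lambda>a. a + b) ` A \<inter> (\<lambda>a. a + bs j) ` A)"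
    using assms(2,3) by fast
  hence "card (Z \<inter> (\<Union>j<s. Y j)) \<le> card (\<Union>j<s. (\<lambda>a. a + b) ` A \<inter> (\<lambda>a. a + bs j) ` A)"
    by (rule card_mono[rotated]) (use assms(1) in simp)
  also have "\<dots> \<le> (\<Sum>j<s. card ((\<lambda>a. a + b) ` A \<inter> (\<lambda>a. a + bs j) ` A))"
    by (rule card_UN_le) simp
  finally show ?thesis .
qed

lemma swap_bound:
  fixes A B C :: "'a::ab_group_add set"
  assumes "finite B" "C \<subseteq> B"
  shows "(\<Sum>b\<in>C. \<Sum>j<(s::nat). card ((\<lambda>a. a + b) ` A \<inter> (\<lambda>a. a + bs j) ` A))
     \<le> (\<Sum>j<s. \<Sum>b\<in>B. card ((\<lambda>a. a + b) ` A \<inter> (\<lambda>a. a + bs j) ` A))"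
proof -
  have "(\<Sum>b\<in>C. \<Sum>j<(s::nat). card ((\<lambda>a. a + b) ` A \<inter> (\<lambda>a. a + bs j) ` A))
     \<le> (\<Sum>b\<in>B. \<Sum>j<(s::nat). card ((\<lambda>a. a + b) ` A \<inter> (\<lambda>a. a + bs j) ` A))"
    by (rule sum_mono2) (use assms in auto)
  also have "\<dots> = (\<Sum>j<s. \<Sum>b\<in>B. card ((\<lambda>a. a + b) ` A \<inter> (\<lambda>a. a + bs j) ` A))"
    by (rule sum.swap)
  finally show ?thesis .
qed

lemma markov:
  fixes g :: "'b \<Rightarrow> real"
  assumes "finite B" "\<forall>b\<in>B. 0 \<le> g b"
  shows "real (card {b\<in>B. g b > K}) * K \<le> (\<Sum>b\<in>B. g b)"
proof -
  have "real (card {b\<in>B. g b > K}) * K = (\<Sum>b\<in>{b\<in>B. g b > K}. K)" by simp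
  also have "\<dots> \<le> (\<Sum>b\<in>{b\<in>B. g b > K}. g b)" by (rule sum_mono) auto
  also have "\<dots> \<le> (\<Sum>b\<in>B. g b)" by (rule sum_mono2) (use assms in auto)
  finally show ?thesis .
qed

lemma card_trans:
  fixes A :: "'a::ab_group_add set"
  shows "card ((\<lambda>a. a + b) ` A) = card A"
  by (rule card_image) (simp add: inj_on_def)

lemma part1:
  fixes A B :: "'a::ab_group_add set"
  assumes fA: "finite A" and fB: "finite B" and nA: "A \<noteq> {}" and nB: "B \<noteq> {}"
  shows "\<exists>s::nat. \<exists>Aj :: nat \<Rightarrow> 'a set. \<exists>b :: nat \<Rightarrow> 'a.
            real s \<ge> (1/16) * real (card A) * real (card B) ^ 2 / real (energy A B)
          \<and> (\<forall>j<s. b j \<in> B \<and> Aj j \<subseteq> (\<lambda>a. a + b j) ` A \<and> real (card (Aj j)) \<ge> real (card A) / 2)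
          \<and> (\<forall>i<s. \<forall>j<s. i \<noteq> j \<longrightarrow> Aj i \<inter> Aj j = {})"
proof -
  define T where "T b = (\<lambda>a. a + b) ` A" for b
  define r where "r b' = (\<Sum>b\<in>B. card (T b \<inter> T b'))" for b'
  define E where "E = real (energy A B)"
  have ES: "E = (\<Sum>b\<in>B. real (r b))"
    unfolding E_def r_def T_def energy_sum[OF fA fB] by simp
  have cA: "card A > 0" using fA nA by auto
  have cB: "card B > 0" using fB nB by auto
  have finT: "finite (T b)" for b unfolding T_def using fA by simp
  have cT: "card (T b) = card A" for b unfolding T_def by (rule card_trans)
  have rpos: "r b \<ge> card A" if "b \<in> B" for b
  proof -
    have "card (T b \<inter> T b) \<le> r b" unfolding r_def by (rule member_le_sum) (use that fB in auto)
    thus ?thesis using cT by simp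
  qed
  obtain b0 where b0: "b0 \<in> B" using nB by auto
  have "real (r b0) \<le> E" unfolding ES by (rule member_le_sum) (use b0 fB in auto)
  hence Epos: "E > 0" using rpos[OF b0] cA by linarith
  define K where "K = 2 * E / real (card B)"
  have Kpos: "K > 0" unfolding K_def using Epos cB by simp
  define H where "H = {b\<in>B. real (r b) > K}"
  define C where "C = B - H"
  have "real (card H) * K \<le> E" unfolding H_def ES by (rule markov) (use fB in auto)
  hence "real (card H) * 2 * E \<le> E * real (card B)" unfolding K_def using cB by (simp add: field_simps)
  hence cH: "real (card H) * 2 \<le> real (card B)" using Epos by (simp add: mult.commute)
  have "card C = card B - card H" unfolding C_def H_def by (rule card_Diff_subset) (use fB in auto)
  moreover have "card H \<le> card B" unfolding H_def by (rule card_mono) (use fB in auto)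
  ultimately have cC: "real (card C) * 2 \<ge> real (card B)" using cH by linarith
  have finC: "finite C" unfolding C_def using fB by simp
  have tpos: "real (card A) / 2 > 0" using cA by simp
  obtain s Y bs where G1: "\<forall>j<(s::nat). bs j \<in> C \<and> Y j \<subseteq> T (bs j) \<and> real (card A) / 2 \<le> real (card (Y j))"
    and G2: "\<forall>i<s. \<forall>j<s. i \<noteq> j \<longrightarrow> Y i \<inter> Y j = {}"
    and G3: "\<forall>b\<in>C. real (card (T b - (\<Union>j<s. Y j))) < real (card A) / 2"
    using greedy[OF finC tpos, of T, OF finT] by blast
  define U where "U = (\<Union>j<s. Y j)"
  have low: "real (card A) / 2 \<le> real (card (T b \<inter> U))" if "b \<in> C" for b
  proof -
    have eq: "real (card A) = real (card (T b \<inter> U)) + real (card (T b - U))"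
      using card_Int_Diff[OF finT, of b U] cT[of b] by simp
    have "real (card (T b - U)) < real (card A) / 2" using G3 that unfolding U_def by auto
    thus ?thesis using eq by linarith
  qed
  have "real (card C) * (real (card A) / 2) = (\<Sum>b\<in>C. real (card A) / 2)" by simp
  also have "\<dots> \<le> (\<Sum>b\<in>C. real (card (T b \<inter> U)))" by (rule sum_mono) (rule low)
  also have "\<dots> \<le> (\<Sum>b\<in>C. real (\<Sum>j<s. card (T b \<inter> T (bs j))))"
  proof (rule sum_mono)
    fix b assume "b \<in> C"
    have "card (T b \<inter> U) \<le> (\<Sum>j<s. card ((\<lambda>a. a + b) ` A \<inter> (\<lambda>a. a + bs j) ` A))"
      unfolding U_def by (rule overlap) (use fA G1 in \<open>auto simp: T_def\<close>)
    thus "real (card (T b \<inter> U)) \<le> real (\<Sum>j<s. card (T b \<inter> T (bs j)))" unfolding T_def of_nat_le_iff .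
  qed
  also have "\<dots> = real (\<Sum>b\<in>C. \<Sum>j<s. card (T b \<inter> T (bs j)))" by simp
  also have "\<dots> \<le> real (\<Sum>j<s. r (bs j))"
  proof -
    have "(\<Sum>b\<in>C. \<Sum>j<s. card (T b \<inter> T (bs j))) \<le> (\<Sum>j<s. r (bs j))"
      unfolding T_def r_def by (rule swap_bound) (use fB in \<open>auto simp: C_def\<close>)
    thus ?thesis by (simp only: of_nat_le_iff)
  qed
  also have "\<dots> = (\<Sum>j<s. real (r (bs j)))" by simp
  also have "\<dots> \<le> (\<Sum>j<s. K)"
  proof (rule sum_mono)
    fix j assume "j \<in> {..<s}"
    hence "bs j \<in> C" using G1 by auto
    thus "real (r (bs j)) \<le> K" unfolding C_def H_def by auto
  qed
  also have "\<dots> = real s * K" by simp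
  finally have main: "real (card C) * (real (card A) / 2) \<le> real s * K" .
  have "real (card B) * (real (card A) / 4) \<le> real s * K"
  proof -
    have "real (card B) / 2 * (real (card A) / 2) \<le> real (card C) * (real (card A) / 2)"
      by (rule mult_right_mono) (use cC in auto)
    moreover have "real (card B) * (real (card A) / 4) = real (card B) / 2 * (real (card A) / 2)" by simp
    ultimately show ?thesis using main by linarith
  qed
  hence "real (card B) * real (card A) * real (card B) \<le> 8 * real s * E"
    unfolding K_def using cB by (simp add: field_simps)
  moreover have "0 \<le> real s * E" using Epos by simp
  ultimately have h16: "real (card A) * real (card B) ^ 2 \<le> 16 * (real s * E)"
    by (simp add: power2_eq_square algebra_simps)
  have fin: "(1/16) * real (card A) * real (card B) ^ 2 / E \<le> real s"
    using Epos h16 by (simp add: field_simps)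
  show ?thesis
    apply (rule exI[where x=s], rule exI[where x=Y], rule exI[where x=bs])
    using fin G1 G2 unfolding E_def C_def T_def by auto
qed

lemma part2:
  fixes A B S :: "'a::ab_group_add set"
  assumes fA: "finite A" and fB: "finite B" and nA: "A \<noteq> {}" and nB: "B \<noteq> {}"
    and SS: "S \<subseteq> sumset A B" and sig: "real (\<Sum>x\<in>S. conv A B x) \<ge> 16 * real (card B)"
  shows "\<exists>s::nat. \<exists>Sj :: nat \<Rightarrow> 'a set. \<exists>b :: nat \<Rightarrow> 'a.
              real s \<ge> (1/256) * real (\<Sum>x\<in>S. conv A B x) ^ 3
                        / (real (card A) ^ 2 * real (card B) * real (energy A B))
            \<and> (\<forall>j<s. b j \<in> B \<and> Sj j \<subseteq> S \<inter> (\<lambda>a. a + b j) ` A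
                   \<and> real (card (Sj j)) \<ge> (1/8) * real (\<Sum>x\<in>S. conv A B x) / real (card B))
            \<and> (\<forall>i<s. \<forall>j<s. i \<noteq> j \<longrightarrow> Sj i \<inter> Sj j = {})"
proof -
  define T where "T b = (\<lambda>a. a + b) ` A" for b
  define r where "r b' = (\<Sum>b\<in>B. card (T b \<inter> T b'))" for b'
  define E where "E = real (energy A B)"
  define \<sigma> where "\<sigma> = real (\<Sum>x\<in>S. conv A B x)"
  define f where "f b = card (S \<inter> T b)" for b
  have ES: "E = (\<Sum>b\<in>B. real (r b))"
    unfolding E_def r_def T_def energy_sum[OF fA fB] by simp
  have cA: "card A > 0" using fA nA by auto
  have cB: "card B > 0" using fB nB by auto
  have finT: "finite (T b)" for b unfolding T_def using fA by simp
  have cT: "card (T b) = card A" for b unfolding T_def by (rule card_trans)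
  have "sumset A B = (\<lambda>p. fst p + snd p) ` (A \<times> B)" unfolding sumset_def by force
  hence fS: "finite S" using SS fA fB finite_subset by (metis finite_SigmaI finite_imageI)
  have sigf: "\<sigma> = (\<Sum>b\<in>B. real (f b))" unfolding \<sigma>_def f_def T_def sigma_eq[OF fS fB] by simp
  have fle: "real (f b) \<le> real (card A)" for b
  proof -
    have "f b \<le> card (T b)" unfolding f_def by (rule card_mono) (use finT in auto)
    thus ?thesis using cT by simp
  qed
  have sigpos: "\<sigma> > 0" using sig cB unfolding \<sigma>_def by linarith
  have sigle: "\<sigma> \<le> real (card A) * real (card B)"
  proof -
    have "\<sigma> \<le> (\<Sum>b\<in>B. real (card A))" unfolding sigf by (rule sum_mono) (rule fle)
    thus ?thesis by (simp add: mult.commute)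
  qed
  have rpos: "r b \<ge> card A" if "b \<in> B" for b
  proof -
    have "card (T b \<inter> T b) \<le> r b" unfolding r_def by (rule member_le_sum) (use that fB in auto)
    thus ?thesis using cT by simp
  qed
  obtain b0 where b0: "b0 \<in> B" using nB by auto
  have "real (r b0) \<le> E" unfolding ES by (rule member_le_sum) (use b0 fB in auto)
  hence Epos: "E > 0" using rpos[OF b0] cA by linarith
  define K where "K = 4 * real (card A) * E / \<sigma>"
  have Kpos: "K > 0" unfolding K_def using Epos cA sigpos by simp
  define t where "t = (1/8) * \<sigma> / real (card B)"
  have tpos: "t > 0" unfolding t_def using sigpos cB by simp
  define H where "H = {b\<in>B. real (r b) > K}"
  define L where "L = {b\<in>B. real (f b) < 4 * t}"
  define C where "C = B - (L \<union> H)"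
  have "real (card H) * K \<le> E" unfolding H_def ES by (rule markov) (use fB in auto)
  hence cH: "real (card H) * real (card A) * 4 \<le> \<sigma>"
    unfolding K_def using Epos sigpos by (simp add: field_simps)
  have finH: "finite H" "finite L" unfolding H_def L_def using fB by auto
  have sH: "(\<Sum>b\<in>H. real (f b)) \<le> \<sigma> / 4"
  proof -
    have "(\<Sum>b\<in>H. real (f b)) \<le> (\<Sum>b\<in>H. real (card A))" by (rule sum_mono) (rule fle)
    thus ?thesis using cH by simp
  qed
  have sL: "(\<Sum>b\<in>L. real (f b)) \<le> \<sigma> / 2"
  proof -
    have "(\<Sum>b\<in>L. real (f b)) \<le> (\<Sum>b\<in>L. 4 * t)" by (rule sum_mono) (auto simp: L_def)
    also have "\<dots> = real (card L) * 4 * t" by simp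
    also have "\<dots> \<le> real (card B) * 4 * t"
    proof -
      have "card L \<le> card B" unfolding L_def by (rule card_mono) (use fB in auto)
      thus ?thesis using tpos by simp
    qed
    also have "\<dots> = \<sigma> / 2" unfolding t_def using cB by simp
    finally show ?thesis .
  qed
  have finC: "finite C" unfolding C_def using fB by simp
  have Bsplit: "B = C \<union> (L \<union> H)" "C \<inter> (L \<union> H) = {}" unfolding C_def L_def H_def by auto
  have "\<sigma> = (\<Sum>b\<in>C. real (f b)) + (\<Sum>b\<in>L \<union> H. real (f b))"
    unfolding sigf by (subst Bsplit(1), rule sum.union_disjoint) (use finC finH Bsplit(2) in auto)
  moreover have "(\<Sum>b\<in>L \<union> H. real (f b)) \<le> (\<Sum>b\<in>L. real (f b)) + (\<Sum>b\<in>H. real (f b))"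
  proof -
    have "(\<Sum>b\<in>L \<inter> H. real (f b)) \<ge> 0" by (rule sum_nonneg) simp
    thus ?thesis using sum_Un[OF finH(2) finH(1), of "\<lambda>b. real (f b)"] by linarith
  qed
  ultimately have sC: "(\<Sum>b\<in>C. real (f b)) \<ge> \<sigma> / 4" using sH sL by linarith
  define X where "X b = S \<inter> T b" for b
  have finX: "finite (X b)" for b unfolding X_def using finT by simp
  obtain s Y bs where G1: "\<forall>j<(s::nat). bs j \<in> C \<and> Y j \<subseteq> X (bs j) \<and> t \<le> real (card (Y j))"
    and G2: "\<forall>i<s. \<forall>j<s. i \<noteq> j \<longrightarrow> Y i \<inter> Y j = {}"
    and G3: "\<forall>b\<in>C. real (card (X b - (\<Union>j<s. Y j))) < t"
    using greedy[OF finC tpos, of X, OF finX] by blast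
  define U where "U = (\<Union>j<s. Y j)"
  have low: "(3/4) * real (f b) \<le> real (card (X b \<inter> U))" if "b \<in> C" for b
  proof -
    have eq: "real (f b) = real (card (X b \<inter> U)) + real (card (X b - U))"
      using card_Int_Diff[OF finX, of b U] unfolding f_def X_def by simp
    have "real (card (X b - U)) < t" using G3 that unfolding U_def by auto
    moreover have "4 * t \<le> real (f b)" using that unfolding C_def L_def by auto
    ultimately show ?thesis using eq by linarith
  qed
  have "(3/4) * (\<sigma> / 4) \<le> (3/4) * (\<Sum>b\<in>C. real (f b))" using sC by simp
  also have "\<dots> = (\<Sum>b\<in>C. (3/4) * real (f b))" by (simp add: sum_distrib_left)
  also have "\<dots> \<le> (\<Sum>b\<in>C. real (card (X b \<inter> U)))" by (rule sum_mono) (rule low)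
  also have "\<dots> \<le> (\<Sum>b\<in>C. real (\<Sum>j<s. card (T b \<inter> T (bs j))))"
  proof (rule sum_mono)
    fix b assume "b \<in> C"
    have "card (X b \<inter> U) \<le> (\<Sum>j<s. card ((\<lambda>a. a + b) ` A \<inter> (\<lambda>a. a + bs j) ` A))"
      unfolding U_def by (rule overlap) (use fA G1 in \<open>auto simp: T_def X_def\<close>)
    thus "real (card (X b \<inter> U)) \<le> real (\<Sum>j<s. card (T b \<inter> T (bs j)))" unfolding T_def of_nat_le_iff .
  qed
  also have "\<dots> = real (\<Sum>b\<in>C. \<Sum>j<s. card (T b \<inter> T (bs j)))" by simp
  also have "\<dots> \<le> real (\<Sum>j<s. r (bs j))"
  proof -
    have "(\<Sum>b\<in>C. \<Sum>j<s. card (T b \<inter> T (bs j))) \<le> (\<Sum>j<s. r (bs j))"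
      unfolding T_def r_def by (rule swap_bound) (use fB in \<open>auto simp: C_def\<close>)
    thus ?thesis by (simp only: of_nat_le_iff)
  qed
  also have "\<dots> = (\<Sum>j<s. real (r (bs j)))" by simp
  also have "\<dots> \<le> (\<Sum>j<s. K)"
  proof (rule sum_mono)
    fix j assume "j \<in> {..<s}"
    hence "bs j \<in> C" using G1 by auto
    thus "real (r (bs j)) \<le> K" unfolding C_def H_def by auto
  qed
  also have "\<dots> = real s * K" by simp
  finally have main: "(3/4) * (\<sigma> / 4) \<le> real s * K" .
  hence m2: "3 * \<sigma> * \<sigma> \<le> 64 * real s * real (card A) * E"
    unfolding K_def using sigpos by (simp add: field_simps)
  have "\<sigma> ^ 3 = \<sigma> * \<sigma> * \<sigma>" by (simp add: power3_eq_cube)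
  also have "\<dots> \<le> \<sigma> * \<sigma> * (real (card A) * real (card B))"
    using sigle sigpos by (simp add: mult_left_mono)
  also have "\<dots> \<le> 64 * real s * real (card A) * E * (real (card A) * real (card B))"
    using m2 by (intro mult_right_mono) (auto intro: order_trans[of _ "3 * \<sigma> * \<sigma>"])
  finally have m3: "\<sigma> ^ 3 \<le> 64 * real s * real (card A) * E * (real (card A) * real (card B))" .
  have fin: "(1/256) * \<sigma> ^ 3 / (real (card A) ^ 2 * real (card B) * E) \<le> real s"
  proof -
    have pos: "real (card A) ^ 2 * real (card B) * E > 0" using cA cB Epos by simp
    have "\<sigma> ^ 3 \<le> 256 * real s * (real (card A) ^ 2 * real (card B) * E)"
    proof -
      have nn: "0 \<le> real s * (real (card A) ^ 2 * real (card B) * E)" using pos by simp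
      have eq: "64 * real s * real (card A) * E * (real (card A) * real (card B))
          = 64 * (real s * (real (card A) ^ 2 * real (card B) * E))" by (simp add: power2_eq_square algebra_simps)
      show ?thesis using m3 nn eq by linarith
    qed
    thus ?thesis using pos by (simp add: field_simps)
  qed
  show ?thesis
    apply (rule exI[where x=s], rule exI[where x=Y], rule exI[where x=bs])
    using fin G1 G2 unfolding E_def C_def X_def T_def \<sigma>_def t_def by auto
qed

theorem lemma9:
  fixes A B :: "'a::ab_group_add set"
  assumes "finite A" "finite B" "A \<noteq> {}" "B \<noteq> {}"
  shows "(\<exists>s::nat. \<exists>Aj :: nat \<Rightarrow> 'a set. \<exists>b :: nat \<Rightarrow> 'a.
            real s \<ge> (1/16) * real (card A) * real (card B) ^ 2 / real (energy A B)
          \<and> (\<forall>j<s. b j \<in> B \<and> Aj j \<subseteq> (\<lambda>a. a + b j) ` A \<and> real (card (Aj j)) \<ge> real (card A) / 2)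
          \<and> (\<forall>i<s. \<forall>j<s. i \<noteq> j \<longrightarrow> Aj i \<inter> Aj j = {}))
       \<and> (\<forall>S. S \<subseteq> sumset A B \<longrightarrow>
            real (\<Sum>x\<in>S. conv A B x) \<ge> 16 * real (card B) \<longrightarrow>
            (\<exists>s::nat. \<exists>Sj :: nat \<Rightarrow> 'a set. \<exists>b :: nat \<Rightarrow> 'a.
              real s \<ge> (1/256) * real (\<Sum>x\<in>S. conv A B x) ^ 3
                        / (real (card A) ^ 2 * real (card B) * real (energy A B))
            \<and> (\<forall>j<s. b j \<in> B \<and> Sj j \<subseteq> S \<inter> (\<lambda>a. a + b j) ` A
                   \<and> real (card (Sj j)) \<ge> (1/8) * real (\<Sum>x\<in>S. conv A B x) / real (card B))
            \<and> (\<forall>i<s. \<forall>j<s. i \<noteq> j \<longrightarrow> Sj i \<inter> Sj j = {})))"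
proof (intro conjI allI impI)
  show "\<exists>s::nat. \<exists>Aj :: nat \<Rightarrow> 'a set. \<exists>b :: nat \<Rightarrow> 'a.
            real s \<ge> (1/16) * real (card A) * real (card B) ^ 2 / real (energy A B)
          \<and> (\<forall>j<s. b j \<in> B \<and> Aj j \<subseteq> (\<lambda>a. a + b j) ` A \<and> real (card (Aj j)) \<ge> real (card A) / 2)
          \<and> (\<forall>i<s. \<forall>j<s. i \<noteq> j \<longrightarrow> Aj i \<inter> Aj j = {})" by (rule part1[OF assms])
next
  fix S assume "S \<subseteq> sumset A B" "real (\<Sum>x\<in>S. conv A B x) \<ge> 16 * real (card B)"
  then show "\<exists>s::nat. \<exists>Sj :: nat \<Rightarrow> 'a set. \<exists>b :: nat \<Rightarrow> 'a.
              real s \<ge> (1/256) * real (\<Sum>x\<in>S. conv A B x) ^ 3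
                        / (real (card A) ^ 2 * real (card B) * real (energy A B))
            \<and> (\<forall>j<s. b j \<in> B \<and> Sj j \<subseteq> S \<inter> (\<lambda>a. a + b j) ` A
                   \<and> real (card (Sj j)) \<ge> (1/8) * real (\<Sum>x\<in>S. conv A B x) / real (card B))
            \<and> (\<forall>i<s. \<forall>j<s. i \<noteq> j \<longrightarrow> Sj i \<inter> Sj j = {})" by (rule part2[OF assms])
qed

end
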